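(* Let $(X,S,\beta)$ be a virtual pair, $H$ a group, and let $(f,g)$ be a noncommutative 2-cocycle pair $X\times X\to H$. If $(\tilde f,g)$ is cohomologous to $(f,g)$, then $(\tilde f,g)$ is also a noncommutative 2-cocycle pair.
   Context: For a bijection $\sigma\colon X\times X\to X\times X$ write $\sigma(x,y)=(\sigma^1(x,y),\sigma^2(x,y))$. A biquandle is a bijection $\sigma$ satisfying $(\mathrm{id}\times\sigma)(\sigma\times\mathrm{id})(\mathrm{id}\times\sigma)=(\sigma\times\mathrm{id})(\mathrm{id}\times\sigma)(\sigma\times\mathrm{id})$, such that for all $x,z$ there is a unique $y$ with $\sigma^1(x,y)=z$, for all $y,t$ there is a unique $x$ with $\sigma^2(x,y)=t$, and there is a bijection $s_\sigma$ with $\{(x,y):\sigma(x,y)=(x,y)\}=\{(x,s_\sigma(x))\}$. A virtual pair $(X,S,\beta)$: biquandles $(X,S),(X,\beta)$ with $\beta^2=\mathrm{id}$ and $(\mathrm{id}\times\beta)(S\times\mathrm{id})(\mathrm{id}\times\beta)=(\beta\times\mathrm{id})(\mathrm{id}\times S)(\beta\times\mathrm{id})$; write $s=s_S$ (also $s_S$) and $s_\beta$. A noncommutative 2-cocycle pair is a pair $f,g\colon X\times X\to H$ such that for all $x,y,z\in X$: (f1) $f(x,y)f(S^2(x,y),z)=f(x,S^1(y,z))f(S^2(x,S^1(y,z)),S^2(y,z))$; (f2) $f(S^1(x,y),S^1(S^2(x,y),z))=f(y,z)$; (f3) $f(x,s(x))=1$; (g1) $g(x,s_\beta(x))=1$;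 (g2) $g(x,y)g(\beta(x,y))=1$; (g3) $g(x,y)g(\beta^2(x,y),z)=g(x,\beta^1(y,z))g(\beta^2(x,\beta^1(y,z)),\beta^2(y,z))$; (g4) $g(y,z)g(\beta^2(x,\beta^1(y,z)),\beta^2(y,z))=g(x,y)g(\beta^1(x,y),\beta^1(\beta^2(x,y),z))$; (g5) $g(y,z)g(x,\beta^1(y,z))=g(\beta^2(x,y),z)g(\beta^1(x,y),\beta^1(\beta^2(x,y),z))$; (m1) $g(y,z)=g(S^1(x,y),\beta^1(S^2(x,y),z))$; (m2) $g(y,z)g(x,\beta^1(y,z))=g(S^2(x,y),z)g(S^1(x,y),\beta^1(S^2(x,y),z))$; (m3) $g(x,\beta^1(y,z))f(\beta^2(x,\beta^1(y,z)),\beta^2(y,z))=f(x,y)g(S^2(x,y),z)$. Two pairs $(f,g)$ and $(\tilde f,\tilde g)$ of maps $X\times X\to H$ are cohomologous if $g=\tilde g$ and there is a map $\lambda\colon X\to H$ with $\tilde f(x,y)=\lambda(x)f(x,y)\lambda(S^2(x,y))^{-1}$ for all $x,y$, where $\lambda$ satisfies, for all $x,y\in X$: $\lambda(x)=\lambda(s_S(x))$, $\lambda(y)=\lambda(S^1(x,y))$, $\lambda(y)=\lambda(\beta^1(x,y))$, and $\lambda(x)$ commutes with $g(x,y)$. *)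

theory Defs
  imports "HOL-Algebra.Group"
begin

definition s1 :: "('a \<times> 'a \<Rightarrow> 'a \<times> 'a) \<Rightarrow> 'a \<Rightarrow> 'a \<Rightarrow> 'a" where
  "s1 \<sigma> x y = fst (\<sigma> (x, y))"
definition s2 :: "('a \<times> 'a \<Rightarrow> 'a \<times> 'a) \<Rightarrow> 'a \<Rightarrow> 'a \<Rightarrow> 'a" where
  "s2 \<sigma> x y = snd (\<sigma> (x, y))"

definition left_op :: "('a \<times> 'a \<Rightarrow> 'a \<times> 'a) \<Rightarrow> 'a \<times> 'a \<times> 'a \<Rightarrow> 'a \<times> 'a \<times> 'a" where
  "left_op \<sigma> t = (case t of (x, y, z) \<Rightarrow> (fst (\<sigma> (x, y)), snd (\<sigma> (x, y)), z))"
definition right_op :: "('a \<times> 'a \<Rightarrow> 'a \<times> 'a) \<Rightarrow> 'a \<times> 'a \<times> 'a \<Rightarrow> 'a \<times> 'a \<times> 'a" where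
  "right_op \<sigma> t = (case t of (x, y, z) \<Rightarrow> (x, fst (\<sigma> (y, z)), snd (\<sigma> (y, z))))"

definition biquandle :: "'a set \<Rightarrow> ('a \<times> 'a \<Rightarrow> 'a \<times> 'a) \<Rightarrow> bool" where
  "biquandle X \<sigma> \<longleftrightarrow>
     bij_betw \<sigma> (X \<times> X) (X \<times> X) \<and>
     (\<forall>t \<in> X \<times> X \<times> X.
        right_op \<sigma> (left_op \<sigma> (right_op \<sigma> t)) = left_op \<sigma> (right_op \<sigma> (left_op \<sigma> t))) \<and>
     (\<forall>x\<in>X. \<forall>z\<in>X. \<exists>!y. y \<in> X \<and> s1 \<sigma> x y = z) \<and>
     (\<forall>y\<in>X. \<forall>t\<in>X. \<exists>!x. x \<in> X \<and> s2 \<sigma> x y = t) \<and>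
     (\<exists>s. bij_betw s X X \<and>
          {p \<in> X \<times> X. \<sigma> p = p} = {(x, s x) | x. x \<in> X})"

(* The map s_sigma: s_sigma(x) is the unique y with sigma(x,y) = (x,y)
   (well defined for a biquandle). *)
definition sfun :: "'a set \<Rightarrow> ('a \<times> 'a \<Rightarrow> 'a \<times> 'a) \<Rightarrow> 'a \<Rightarrow> 'a" where
  "sfun X \<sigma> x = (THE y. y \<in> X \<and> \<sigma> (x, y) = (x, y))"

definition virtual_pair :: "'a set \<Rightarrow> ('a \<times> 'a \<Rightarrow> 'a \<times> 'a) \<Rightarrow> ('a \<times> 'a \<Rightarrow> 'a \<times> 'a) \<Rightarrow> bool" where
  "virtual_pair X S \<beta> \<longleftrightarrow>
     biquandle X S \<and> biquandle X \<beta> \<and>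
     (\<forall>p \<in> X \<times> X. \<beta> (\<beta> p) = p) \<and>
     (\<forall>t \<in> X \<times> X \<times> X.
        right_op \<beta> (left_op S (right_op \<beta> t)) = left_op \<beta> (right_op S (left_op \<beta> t)))"

definition nc_cocycle_pair ::
  "('b, 'c) monoid_scheme \<Rightarrow> 'a set \<Rightarrow> ('a \<times> 'a \<Rightarrow> 'a \<times> 'a) \<Rightarrow> ('a \<times> 'a \<Rightarrow> 'a \<times> 'a)
   \<Rightarrow> ('a \<Rightarrow> 'a \<Rightarrow> 'b) \<Rightarrow> ('a \<Rightarrow> 'a \<Rightarrow> 'b) \<Rightarrow> bool" where
  "nc_cocycle_pair H X S \<beta> f g \<longleftrightarrow>
     (\<forall>x\<in>X. \<forall>y\<in>X. f x y \<in> carrier H \<and> g x y \<in> carrier H) \<and>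
     (\<forall>x\<in>X. \<forall>y\<in>X. \<forall>z\<in>X.
        f x y \<otimes>\<^bsub>H\<^esub> f (s2 S x y) z
          = f x (s1 S y z) \<otimes>\<^bsub>H\<^esub> f (s2 S x (s1 S y z)) (s2 S y z)) \<and>
     (\<forall>x\<in>X. \<forall>y\<in>X. \<forall>z\<in>X. f (s1 S x y) (s1 S (s2 S x y) z) = f y z) \<and>
     (\<forall>x\<in>X. f x (sfun X S x) = \<one>\<^bsub>H\<^esub>) \<and>
     (\<forall>x\<in>X. g x (sfun X \<beta> x) = \<one>\<^bsub>H\<^esub>) \<and>
     (\<forall>x\<in>X. \<forall>y\<in>X. g x y \<otimes>\<^bsub>H\<^esub> g (s1 \<beta> x y) (s2 \<beta> x y) = \<one>\<^bsub>H\<^esub>) \<and>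
     (\<forall>x\<in>X. \<forall>y\<in>X. \<forall>z\<in>X.
        g x y \<otimes>\<^bsub>H\<^esub> g (s2 \<beta> x y) z
          = g x (s1 \<beta> y z) \<otimes>\<^bsub>H\<^esub> g (s2 \<beta> x (s1 \<beta> y z)) (s2 \<beta> y z)) \<and>
     (\<forall>x\<in>X. \<forall>y\<in>X. \<forall>z\<in>X.
        g y z \<otimes>\<^bsub>H\<^esub> g (s2 \<beta> x (s1 \<beta> y z)) (s2 \<beta> y z)
          = g x y \<otimes>\<^bsub>H\<^esub> g (s1 \<beta> x y) (s1 \<beta> (s2 \<beta> x y) z)) \<and>
     (\<forall>x\<in>X. \<forall>y\<in>X. \<forall>z\<in>X.
        g y z \<otimes>\<^bsub>H\<^esub> g x (s1 \<beta> y z)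
          = g (s2 \<beta> x y) z \<otimes>\<^bsub>H\<^esub> g (s1 \<beta> x y) (s1 \<beta> (s2 \<beta> x y) z)) \<and>
     (\<forall>x\<in>X. \<forall>y\<in>X. \<forall>z\<in>X. g y z = g (s1 S x y) (s1 \<beta> (s2 S x y) z)) \<and>
     (\<forall>x\<in>X. \<forall>y\<in>X. \<forall>z\<in>X.
        g y z \<otimes>\<^bsub>H\<^esub> g x (s1 \<beta> y z)
          = g (s2 S x y) z \<otimes>\<^bsub>H\<^esub> g (s1 S x y) (s1 \<beta> (s2 S x y) z)) \<and>
     (\<forall>x\<in>X. \<forall>y\<in>X. \<forall>z\<in>X.
        g x (s1 \<beta> y z) \<otimes>\<^bsub>H\<^esub> f (s2 \<beta> x (s1 \<beta> y z)) (s2 \<beta> y z)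
          = f x y \<otimes>\<^bsub>H\<^esub> g (s2 S x y) z)"

definition cohomologous ::
  "('b, 'c) monoid_scheme \<Rightarrow> 'a set \<Rightarrow> ('a \<times> 'a \<Rightarrow> 'a \<times> 'a) \<Rightarrow> ('a \<times> 'a \<Rightarrow> 'a \<times> 'a)
   \<Rightarrow> ('a \<Rightarrow> 'a \<Rightarrow> 'b) \<Rightarrow> ('a \<Rightarrow> 'a \<Rightarrow> 'b) \<Rightarrow> ('a \<Rightarrow> 'a \<Rightarrow> 'b) \<Rightarrow> ('a \<Rightarrow> 'a \<Rightarrow> 'b) \<Rightarrow> bool" where
  "cohomologous H X S \<beta> f g f' g' \<longleftrightarrow>
     (\<forall>x\<in>X. \<forall>y\<in>X. g' x y = g x y) \<and>
     (\<exists>lam. (\<forall>x\<in>X. lam x \<in> carrier H) \<and>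
          (\<forall>x\<in>X. \<forall>y\<in>X.
             f' x y = lam x \<otimes>\<^bsub>H\<^esub> f x y \<otimes>\<^bsub>H\<^esub> inv\<^bsub>H\<^esub> (lam (s2 S x y))) \<and>
          (\<forall>x\<in>X. lam x = lam (sfun X S x)) \<and>
          (\<forall>x\<in>X. \<forall>y\<in>X. lam y = lam (s1 S x y)) \<and>
          (\<forall>x\<in>X. \<forall>y\<in>X. lam y = lam (s1 \<beta> x y)) \<and>
          (\<forall>x\<in>X. \<forall>y\<in>X. lam x \<otimes>\<^bsub>H\<^esub> g x y = g x y \<otimes>\<^bsub>H\<^esub> lam x))"

end

theory Submission
  imports Defs
begin

context group
begin

lemma hinv: "c \<in> carrier G \<Longrightarrow> x \<in> carrier G \<Longrightarrow> inv c \<otimes> (c \<otimes> x) = x"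
  by (simp add: m_assoc[symmetric])

lemma hA:
  assumes "a \<in> carrier G" "b \<in> carrier G" "c \<in> carrier G" "d \<in> carrier G" "e \<in> carrier G"
  shows "(a \<otimes> b \<otimes> inv c) \<otimes> (c \<otimes> d \<otimes> inv e) = a \<otimes> (b \<otimes> d) \<otimes> inv e"
proof -
  have h: "inv c \<otimes> (c \<otimes> (d \<otimes> inv e)) = d \<otimes> inv e" by (rule hinv) (use assms in auto)
  have "(a \<otimes> b \<otimes> inv c) \<otimes> (c \<otimes> d \<otimes> inv e) = (a \<otimes> b) \<otimes> (inv c \<otimes> (c \<otimes> (d \<otimes> inv e)))"
    using assms by (simp add: m_assoc)
  also have "\<dots> = (a \<otimes> b) \<otimes> (d \<otimes> inv e)" using h by simp
  also have "\<dots> = a \<otimes> (b \<otimes> d) \<otimes> inv e" using assms by (simp add: m_assoc)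
  finally show ?thesis .
qed

lemma hB:
  assumes "a \<in> carrier G" "b \<in> carrier G" "d \<in> carrier G" "e \<in> carrier G"
  shows "a \<otimes> (b \<otimes> d) \<otimes> inv e = a \<otimes> b \<otimes> d \<otimes> inv e"
  using assms by (simp add: m_assoc)

lemma hM:
  assumes c: "g1 \<in> carrier G" "l \<in> carrier G" "F \<in> carrier G" "m \<in> carrier G" "F0 \<in> carrier G" "Gg \<in> carrier G"
    and cm1: "l \<otimes> g1 = g1 \<otimes> l" and cm2: "m \<otimes> Gg = Gg \<otimes> m"
    and eq: "g1 \<otimes> F = F0 \<otimes> Gg"
  shows "g1 \<otimes> (l \<otimes> F \<otimes> inv m) = l \<otimes> F0 \<otimes> inv m \<otimes> Gg"
proof -
  have "g1 \<otimes> (l \<otimes> F \<otimes> inv m) = (g1 \<otimes> l) \<otimes> F \<otimes> inv m" using c by (simp add: m_assoc)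
  also have "\<dots> = l \<otimes> g1 \<otimes> F \<otimes> inv m" using c cm1 by simp
  also have "\<dots> = l \<otimes> (g1 \<otimes> F) \<otimes> inv m" using c by (simp add: m_assoc)
  also have "\<dots> = l \<otimes> F0 \<otimes> (Gg \<otimes> inv m)" using c eq by (simp add: m_assoc)
  also have "Gg \<otimes> inv m = inv m \<otimes> Gg"
  proof -
    have "m \<otimes> (Gg \<otimes> inv m) = (m \<otimes> Gg) \<otimes> inv m" using c by (simp add: m_assoc)
    also have "\<dots> = (Gg \<otimes> m) \<otimes> inv m" using cm2 by simp
    also have "\<dots> = Gg" using c by (simp add: m_assoc)
    finally have e: "m \<otimes> (Gg \<otimes> inv m) = Gg" .
    have "Gg \<otimes> inv m = inv m \<otimes> (m \<otimes> (Gg \<otimes> inv m))" using c by (simp add: hinv)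
    also have "\<dots> = inv m \<otimes> Gg" using e by simp
    finally show ?thesis .
  qed
  also have "l \<otimes> F0 \<otimes> (inv m \<otimes> Gg) = l \<otimes> F0 \<otimes> inv m \<otimes> Gg" using c by (simp add: m_assoc)
  finally show ?thesis .
qed

end

lemma biq_closed:
  assumes "biquandle X \<sigma>" "x \<in> X" "y \<in> X"
  shows "s1 \<sigma> x y \<in> X" "s2 \<sigma> x y \<in> X"
proof -
  have "bij_betw \<sigma> (X \<times> X) (X \<times> X)" using assms(1) unfolding biquandle_def by (rule conjunct1)
  hence "\<sigma> (x, y) \<in> X \<times> X" using assms(2,3) bij_betwE by blast
  thus "s1 \<sigma> x y \<in> X" "s2 \<sigma> x y \<in> X" unfolding s1_def s2_def by auto
qed

lemma rop: "right_op \<sigma> (x, y, z) = (x, fst (\<sigma> (y, z)), snd (\<sigma> (y, z)))"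
  unfolding right_op_def by simp

lemma lop: "left_op \<sigma> (x, y, z) = (fst (\<sigma> (x, y)), snd (\<sigma> (x, y)), z)"
  unfolding left_op_def by simp

lemma biq_braid:
  assumes "biquandle X \<sigma>" "x \<in> X" "y \<in> X" "z \<in> X"
  shows "s2 \<sigma> (s2 \<sigma> x (s1 \<sigma> y z)) (s2 \<sigma> y z) = s2 \<sigma> (s2 \<sigma> x y) z"
    "s1 \<sigma> (s2 \<sigma> x (s1 \<sigma> y z)) (s2 \<sigma> y z) = s2 \<sigma> (s1 \<sigma> x y) (s1 \<sigma> (s2 \<sigma> x y) z)"
proof -
  have "right_op \<sigma> (left_op \<sigma> (right_op \<sigma> (x,y,z))) = left_op \<sigma> (right_op \<sigma> (left_op \<sigma> (x,y,z)))"
  proof -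
    have t: "(x,y,z) \<in> X \<times> X \<times> X" using assms by simp
    show ?thesis using bspec[OF assms(1)[unfolded biquandle_def, THEN conjunct2, THEN conjunct1] t] .
  qed
  hence e: "(fst (\<sigma> (x, fst (\<sigma> (y, z)))),
     fst (\<sigma> (snd (\<sigma> (x, fst (\<sigma> (y, z)))), snd (\<sigma> (y, z)))),
     snd (\<sigma> (snd (\<sigma> (x, fst (\<sigma> (y, z)))), snd (\<sigma> (y, z))))) =
    (fst (\<sigma> (fst (\<sigma> (x, y)), fst (\<sigma> (snd (\<sigma> (x, y)), z)))),
     snd (\<sigma> (fst (\<sigma> (x, y)), fst (\<sigma> (snd (\<sigma> (x, y)), z)))),
     snd (\<sigma> (snd (\<sigma> (x, y)), z)))"
    by (simp only: rop lop)
  from e show "s2 \<sigma> (s2 \<sigma> x (s1 \<sigma> y z)) (s2 \<sigma> y z) = s2 \<sigma> (s2 \<sigma> x y) z"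
    unfolding s1_def s2_def by simp
  from e show "s1 \<sigma> (s2 \<sigma> x (s1 \<sigma> y z)) (s2 \<sigma> y z) = s2 \<sigma> (s1 \<sigma> x y) (s1 \<sigma> (s2 \<sigma> x y) z)"
    unfolding s1_def s2_def by simp
qed

lemma virt_third:
  assumes "virtual_pair X S \<beta>" "x \<in> X" "y \<in> X" "z \<in> X"
  shows "s2 \<beta> (s2 S x (s1 \<beta> y z)) (s2 \<beta> y z) = s2 S (s2 \<beta> x y) z"
proof -
  have "right_op \<beta> (left_op S (right_op \<beta> (x,y,z))) = left_op \<beta> (right_op S (left_op \<beta> (x,y,z)))"
  proof -
    have t: "(x,y,z) \<in> X \<times> X \<times> X" using assms by simp
    show ?thesis using bspec[OF assms(1)[unfolded virtual_pair_def, THEN conjunct2, THEN conjunct2, THEN conjunct2] t] .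
  qed
  hence "snd (snd (right_op \<beta> (left_op S (right_op \<beta> (x,y,z))))) = snd (snd (left_op \<beta> (right_op S (left_op \<beta> (x,y,z)))))"
    by simp
  thus ?thesis unfolding rop lop s1_def s2_def by simp
qed

lemma sfun_prop:
  assumes "biquandle X \<sigma>" "x \<in> X"
  shows "sfun X \<sigma> x \<in> X \<and> \<sigma> (x, sfun X \<sigma> x) = (x, sfun X \<sigma> x)"
proof -
  obtain s where s: "bij_betw s X X" "{p \<in> X \<times> X. \<sigma> p = p} = {(x, s x) | x. x \<in> X}"
    using assms(1)[unfolded biquandle_def, THEN conjunct2, THEN conjunct2, THEN conjunct2, THEN conjunct2] by (elim exE conjE)
  have sx: "s x \<in> X" using s(1) assms(2) bij_betwE by blast
  have "(x, s x) \<in> {(x, s x) | x. x \<in> X}" using assms(2) by blast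
  hence "(x, s x) \<in> {p \<in> X \<times> X. \<sigma> p = p}" by (subst s(2))
  hence fx: "\<sigma> (x, s x) = (x, s x)" by simp
  have un: "y = s x" if "y \<in> X" "\<sigma> (x, y) = (x, y)" for y
  proof -
    have "(x, y) \<in> {p \<in> X \<times> X. \<sigma> p = p}" using that assms(2) by simp
    hence "(x, y) \<in> {(x, s x) | x. x \<in> X}" by (subst s(2)[symmetric])
    thus ?thesis by simp
  qed
  have "sfun X \<sigma> x = s x" unfolding sfun_def
  proof (rule the_equality)
    show "s x \<in> X \<and> \<sigma> (x, s x) = (x, s x)" using sx fx by simp
    fix y assume "y \<in> X \<and> \<sigma> (x, y) = (x, y)"
    thus "y = s x" using un by blast
  qed
  thus ?thesis using sx fx by simp
qed

theorem mainTheorem6: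
  fixes H :: "('b, 'c) monoid_scheme" and X :: "'a set"
    and S \<beta> :: "'a \<times> 'a \<Rightarrow> 'a \<times> 'a"
    and f g f' :: "'a \<Rightarrow> 'a \<Rightarrow> 'b"
  assumes "virtual_pair X S \<beta>"
    and "group H"
    and "nc_cocycle_pair H X S \<beta> f g"
    and "cohomologous H X S \<beta> f g f' g"
  shows "nc_cocycle_pair H X S \<beta> f' g"
proof -
  interpret G: group H by fact
  note V = assms(1)[unfolded virtual_pair_def]
  note bS = V[THEN conjunct1] and bB = V[THEN conjunct2, THEN conjunct1]
    and binv = V[THEN conjunct2, THEN conjunct2, THEN conjunct1]
  note SC = biq_closed[OF bS] and BC = biq_closed[OF bB]
  obtain lam where lc: "\<forall>x\<in>X. lam x \<in> carrier H"
    and fd: "\<forall>x\<in>X. \<forall>y\<in>X. f' x y = lam x \<otimes>\<^bsub>H\<^esub> f x y \<otimes>\<^bsub>H\<^esub> inv\<^bsub>H\<^esub> (lam (s2 S x y))"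
    and ls: "\<forall>x\<in>X. lam x = lam (sfun X S x)"
    and l1: "\<forall>x\<in>X. \<forall>y\<in>X. lam y = lam (s1 S x y)"
    and l2: "\<forall>x\<in>X. \<forall>y\<in>X. lam y = lam (s1 \<beta> x y)"
    and lg: "\<forall>x\<in>X. \<forall>y\<in>X. lam x \<otimes>\<^bsub>H\<^esub> g x y = g x y \<otimes>\<^bsub>H\<^esub> lam x"
  proof -
    from assms(4)[unfolded cohomologous_def, THEN conjunct2] obtain lam where "(\<forall>x\<in>X. lam x \<in> carrier H) \<and>
          (\<forall>x\<in>X. \<forall>y\<in>X.
             f' x y = lam x \<otimes>\<^bsub>H\<^esub> f x y \<otimes>\<^bsub>H\<^esub> inv\<^bsub>H\<^esub> (lam (s2 S x y))) \<and>
          (\<forall>x\<in>X. lam x = lam (sfun X S x)) \<and>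
          (\<forall>x\<in>X. \<forall>y\<in>X. lam y = lam (s1 S x y)) \<and>
          (\<forall>x\<in>X. \<forall>y\<in>X. lam y = lam (s1 \<beta> x y)) \<and>
          (\<forall>x\<in>X. \<forall>y\<in>X. lam x \<otimes>\<^bsub>H\<^esub> g x y = g x y \<otimes>\<^bsub>H\<^esub> lam x)"
      by (rule exE)
    thus ?thesis using that by (elim conjE)
  qed
  note C = assms(3)[unfolded nc_cocycle_pair_def]
  note c1 = C[THEN conjunct1]
  note c2 = C[THEN conjunct2, THEN conjunct1]
  note c3 = C[THEN conjunct2, THEN conjunct2, THEN conjunct1]
  note c4 = C[THEN conjunct2, THEN conjunct2, THEN conjunct2, THEN conjunct1]
  note c5 = C[THEN conjunct2, THEN conjunct2, THEN conjunct2, THEN conjunct2, THEN conjunct1]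
  note c6 = C[THEN conjunct2, THEN conjunct2, THEN conjunct2, THEN conjunct2, THEN conjunct2, THEN conjunct1]
  note c7 = C[THEN conjunct2, THEN conjunct2, THEN conjunct2, THEN conjunct2, THEN conjunct2, THEN conjunct2, THEN conjunct1]
  note c8 = C[THEN conjunct2, THEN conjunct2, THEN conjunct2, THEN conjunct2, THEN conjunct2, THEN conjunct2, THEN conjunct2, THEN conjunct1]
  note c9 = C[THEN conjunct2, THEN conjunct2, THEN conjunct2, THEN conjunct2, THEN conjunct2, THEN conjunct2, THEN conjunct2, THEN conjunct2, THEN conjunct1]
  note c10 = C[THEN conjunct2, THEN conjunct2, THEN conjunct2, THEN conjunct2, THEN conjunct2, THEN conjunct2, THEN conjunct2, THEN conjunct2, THEN conjunct2, THEN conjunct1]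
  note c11 = C[THEN conjunct2, THEN conjunct2, THEN conjunct2, THEN conjunct2, THEN conjunct2, THEN conjunct2, THEN conjunct2, THEN conjunct2, THEN conjunct2, THEN conjunct2, THEN conjunct1]
  note c12 = C[THEN conjunct2, THEN conjunct2, THEN conjunct2, THEN conjunct2, THEN conjunct2, THEN conjunct2, THEN conjunct2, THEN conjunct2, THEN conjunct2, THEN conjunct2, THEN conjunct2]
  have fc: "\<And>x y. x \<in> X \<Longrightarrow> y \<in> X \<Longrightarrow> f x y \<in> carrier H" using c1 by blast
  have gc: "\<And>x y. x \<in> X \<Longrightarrow> y \<in> X \<Longrightarrow> g x y \<in> carrier H" using c1 by blast
  have f1: "\<And>x y z. x \<in> X \<Longrightarrow> y \<in> X \<Longrightarrow> z \<in> X \<Longrightarrow> f x y \<otimes>\<^bsub>H\<^esub> f (s2 S x y) z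
          = f x (s1 S y z) \<otimes>\<^bsub>H\<^esub> f (s2 S x (s1 S y z)) (s2 S y z)" using c2 by blast
  have f2: "\<And>x y z. x \<in> X \<Longrightarrow> y \<in> X \<Longrightarrow> z \<in> X \<Longrightarrow> f (s1 S x y) (s1 S (s2 S x y) z) = f y z"
    using c3 by blast
  have f3: "\<And>x. x \<in> X \<Longrightarrow> f x (sfun X S x) = \<one>\<^bsub>H\<^esub>" using c4 by blast
  have m3: "\<And>x y z. x \<in> X \<Longrightarrow> y \<in> X \<Longrightarrow> z \<in> X \<Longrightarrow>
        g x (s1 \<beta> y z) \<otimes>\<^bsub>H\<^esub> f (s2 \<beta> x (s1 \<beta> y z)) (s2 \<beta> y z)
          = f x y \<otimes>\<^bsub>H\<^esub> g (s2 S x y) z" using c12 by blast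
  have binv1: "\<And>x y. x \<in> X \<Longrightarrow> y \<in> X \<Longrightarrow> s1 \<beta> (s1 \<beta> x y) (s2 \<beta> x y) = x \<and> s1 \<beta> (s1 \<beta> x y) (s2 \<beta> x y) = x \<and> s2 \<beta> (s1 \<beta> x y) (s2 \<beta> x y) = y"
  proof -
    fix x y assume "x \<in> X" "y \<in> X"
    hence "(x,y) \<in> X \<times> X" by simp
    hence "\<beta> (\<beta> (x,y)) = (x,y)" by (rule bspec[OF binv])
    thus "?thesis x y" unfolding s1_def s2_def by (metis fst_conv prod.collapse snd_conv)
  qed
  have L1: "\<And>x y. x \<in> X \<Longrightarrow> y \<in> X \<Longrightarrow> lam (s2 \<beta> x y) = lam x"
  proof -
    fix x y assume xy: "x \<in> X" "y \<in> X"
    have "lam (s2 \<beta> x y) = lam (s1 \<beta> (s1 \<beta> x y) (s2 \<beta> x y))"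
      using bspec[OF bspec[OF l2 BC(1)[OF xy]] BC(2)[OF xy]] by simp
    also have "\<dots> = lam x" using binv1[OF xy] by simp
    finally show "lam (s2 \<beta> x y) = lam x" .
  qed
  have f'c: "\<And>x y. x \<in> X \<Longrightarrow> y \<in> X \<Longrightarrow> f' x y \<in> carrier H"
    using fd lc fc SC by simp
  have F1: "f' x y \<otimes>\<^bsub>H\<^esub> f' (s2 S x y) z
          = f' x (s1 S y z) \<otimes>\<^bsub>H\<^esub> f' (s2 S x (s1 S y z)) (s2 S y z)"
    if X: "x \<in> X" "y \<in> X" "z \<in> X" for x y z
  proof -
    have "f' x y \<otimes>\<^bsub>H\<^esub> f' (s2 S x y) z = lam x \<otimes>\<^bsub>H\<^esub> (f x y \<otimes>\<^bsub>H\<^esub> f (s2 S x y) z) \<otimes>\<^bsub>H\<^esub> inv\<^bsub>H\<^esub> lam (s2 S (s2 S x y) z)"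
      using X fd lc fc SC by (simp add: G.hA)
    also have "\<dots> = lam x \<otimes>\<^bsub>H\<^esub> (f x (s1 S y z) \<otimes>\<^bsub>H\<^esub> f (s2 S x (s1 S y z)) (s2 S y z)) \<otimes>\<^bsub>H\<^esub> inv\<^bsub>H\<^esub> lam (s2 S (s2 S x (s1 S y z)) (s2 S y z))"
      using f1[OF X] biq_braid(1)[OF bS X] by simp
    also have "\<dots> = f' x (s1 S y z) \<otimes>\<^bsub>H\<^esub> f' (s2 S x (s1 S y z)) (s2 S y z)"
      using X fd lc fc SC by (simp add: G.hA)
    finally show ?thesis .
  qed
  have F2: "f' (s1 S x y) (s1 S (s2 S x y) z) = f' y z" if X: "x \<in> X" "y \<in> X" "z \<in> X" for x y z
  proof -
    have "lam (s2 S (s1 S x y) (s1 S (s2 S x y) z)) = lam (s2 S y z)"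
    proof -
      have a: "s2 S x (s1 S y z) \<in> X" "s2 S y z \<in> X" using SC X by auto
      have "lam (s2 S (s1 S x y) (s1 S (s2 S x y) z)) = lam (s1 S (s2 S x (s1 S y z)) (s2 S y z))"
        using biq_braid(2)[OF bS X] by simp
      also have "\<dots> = lam (s2 S y z)" using bspec[OF bspec[OF l1 a(1)] a(2)] by simp
      finally show ?thesis .
    qed
    moreover have "lam (s1 S x y) = lam y" using bspec[OF bspec[OF l1 X(1)] X(2)] by simp
    ultimately show ?thesis using fd SC X f2[OF X] by simp
  qed
  have F3: "f' x (sfun X S x) = \<one>\<^bsub>H\<^esub>" if X: "x \<in> X" for x
  proof -
    have sp: "sfun X S x \<in> X" "S (x, sfun X S x) = (x, sfun X S x)" using sfun_prop[OF bS X] by auto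
    have "s2 S x (sfun X S x) = sfun X S x" using sp(2) unfolding s2_def by simp
    hence "f' x (sfun X S x) = lam x \<otimes>\<^bsub>H\<^esub> \<one>\<^bsub>H\<^esub> \<otimes>\<^bsub>H\<^esub> inv\<^bsub>H\<^esub> lam x"
    proof -
      have "f' x (sfun X S x) = lam x \<otimes>\<^bsub>H\<^esub> f x (sfun X S x) \<otimes>\<^bsub>H\<^esub> inv\<^bsub>H\<^esub> lam (s2 S x (sfun X S x))"
        using fd sp(1) X by blast
      also have "\<dots> = lam x \<otimes>\<^bsub>H\<^esub> \<one>\<^bsub>H\<^esub> \<otimes>\<^bsub>H\<^esub> inv\<^bsub>H\<^esub> lam x"
        using f3[OF X] bspec[OF ls X, symmetric] \<open>s2 S x (sfun X S x) = sfun X S x\<close> by simp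
      finally show ?thesis .
    qed
    thus ?thesis using lc X by simp
  qed
  have M3: "g x (s1 \<beta> y z) \<otimes>\<^bsub>H\<^esub> f' (s2 \<beta> x (s1 \<beta> y z)) (s2 \<beta> y z)
          = f' x y \<otimes>\<^bsub>H\<^esub> g (s2 S x y) z" if X: "x \<in> X" "y \<in> X" "z \<in> X" for x y z
  proof -
    define w where "w = s1 \<beta> y z"
    define v where "v = s2 \<beta> y z"
    have wv: "w \<in> X" "v \<in> X" using BC X unfolding w_def v_def by auto
    have bw: "s2 \<beta> x w \<in> X" using BC X wv by auto
    have T: "lam (s2 S (s2 \<beta> x w) v) = lam (s2 S x y)"
    proof -
      have "s2 \<beta> (s2 S x (s1 \<beta> w v)) (s2 \<beta> w v) = s2 S (s2 \<beta> x w) v"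
        using virt_third[OF assms(1) X(1) wv] .
      hence "lam (s2 S (s2 \<beta> x w) v) = lam (s2 S x (s1 \<beta> w v))"
        using L1[OF SC(2)[OF X(1) BC(1)[OF wv]] BC(2)[OF wv]] by simp
      moreover have "s1 \<beta> w v = y" using binv1[OF X(2,3)] unfolding w_def v_def by simp
      ultimately show ?thesis by simp
    qed
    have "g x w \<otimes>\<^bsub>H\<^esub> f' (s2 \<beta> x w) v = g x w \<otimes>\<^bsub>H\<^esub> (lam x \<otimes>\<^bsub>H\<^esub> f (s2 \<beta> x w) v \<otimes>\<^bsub>H\<^esub> inv\<^bsub>H\<^esub> lam (s2 S x y))"
      using fd bw wv T L1[OF X(1) wv(1)] by simp
    also have "\<dots> = lam x \<otimes>\<^bsub>H\<^esub> f x y \<otimes>\<^bsub>H\<^esub> inv\<^bsub>H\<^esub> lam (s2 S x y) \<otimes>\<^bsub>H\<^esub> g (s2 S x y) z"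
    proof (rule G.hM)
      show "lam x \<otimes>\<^bsub>H\<^esub> g x w = g x w \<otimes>\<^bsub>H\<^esub> lam x" using bspec[OF bspec[OF lg X(1)] wv(1)] .
      show "lam (s2 S x y) \<otimes>\<^bsub>H\<^esub> g (s2 S x y) z = g (s2 S x y) z \<otimes>\<^bsub>H\<^esub> lam (s2 S x y)"
        using bspec[OF bspec[OF lg SC(2)[OF X(1,2)]] X(3)] .
      show "g x w \<otimes>\<^bsub>H\<^esub> f (s2 \<beta> x w) v = f x y \<otimes>\<^bsub>H\<^esub> g (s2 S x y) z"
        using m3[OF X] unfolding w_def v_def .
    qed (use gc fc lc X wv bw SC in auto)
    also have "\<dots> = f' x y \<otimes>\<^bsub>H\<^esub> g (s2 S x y) z" using fd X by simp
    finally show ?thesis unfolding w_def v_def .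
  qed
  show ?thesis
    unfolding nc_cocycle_pair_def
    apply (intro conjI)
    apply (simp add: f'c gc)
    apply (intro ballI, rule F1, assumption+)
    apply (intro ballI, rule F2, assumption+)
    apply (intro ballI, rule F3, assumption)
    apply (rule c5)
    apply (rule c6)
    apply (rule c7)
    apply (rule c8)
    apply (rule c9)
    apply (rule c10)
    apply (rule c11)
    apply (intro ballI, rule M3, assumption+)
    done
qed

end
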